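(* Let $c\in(0,\sqrt2)$ and let $$\Omega_{p,\theta}:=\{(p,\theta): p\in(0,1),\ \theta\in(\theta_{min}(c),\theta_2(c,p)),\ \theta\neq\theta_1(c,p)\},$$ where only those $p$ with $(\theta_{min}(c),\theta_2(c,p))\neq\emptyset$ are considered. Then $$\sup_{(p,\theta)\in\Omega_{p,\theta}} L(c,p,\theta)\le 1-\frac{c}{\pi}\left(\sqrt{2-c^2}+\theta_{min}(c)\right).$$
   Context: Let $\lambda=\frac{\sqrt{2-c^2}}{2}$ and $\omega=\frac{\sqrt{2+c^2}}{2}$ (so $\lambda^2+\omega^2=1$). Define $\zeta(s)=-e^{\lambda s}\bigl(\cos(\omega s)-\frac{\lambda}{\omega}\sin(\omega s)\bigr)$ (the solution of $z^{(4)}+c^2z''+z=0$ with $\zeta(0)=-1$, $\zeta'(0)=0$ decaying as $s\to-\infty$), let $t^*>0$ be the smallest $s>0$ with $\zeta(s)=-1$ (it satisfies $\omega t^*\in(\pi,2\pi)$), and set $\theta_{min}(c):=\zeta'(t^* )=e^{\lambda t^*}\sin(\omega t^* )/\omega<0$. Equivalently, $\theta_{min}(c)$ is the unique negative $\theta$ with $e^{2\lambda t^*}=\theta^2+2\lambda\theta+1$ where $t^*=\frac1\omega\bigl(\frac{3\pi}{2}-\arctan\frac{\lambda\theta+1}{\omega\theta}\bigr)$. For $p\in(0,1)$ put $\xi=pc^4/4$, $\kappa_1^2=\frac{c^2-\sqrt{c^4-4\xi}}{2}$, $\kappa_2^2=\frac{c^2+\sqrt{c^4-4\xi}}{2}$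 ($0<\kappa_1<\kappa_2$), $\theta_{1,2}(c,p)=\dfrac{-2\sqrt{2-c^2}}{2-c^2\mp c^2\sqrt{1-p}}$ (upper sign for $\theta_1$), and $$L(c,p,\theta)=\frac12\Bigl(1+\frac{\kappa_2}{\kappa_1}\Bigr)+\frac1\pi\arctan\!\left(\frac{\kappa_2(-\kappa_1^2+\xi+\xi\theta\sqrt{2-c^2})}{\xi(\theta\kappa_1^2+\sqrt{2-c^2}+\theta(1-c^2))}\right)-\frac{\kappa_2}{\kappa_1\pi}\arctan\!\left(\frac{\kappa_1(-\kappa_2^2+\xi+\xi\theta\sqrt{2-c^2})}{\xi(\theta\kappa_2^2+\sqrt{2-c^2}+\theta(1-c^2))}\right),$$ which is defined for $\theta\neq\theta_1,\theta_2$ (these are exactly the zeros of the two denominators). Even one-troughed solutions of $z^{(4)}+c^2z''+(z+1)^+-\xi(z+1)^--1=0$, $z,z'\to0$ at $\pm\infty$, correspond to solutions $\theta\in(\theta_{min}(c),\theta_2(c,p))$ of $L(c,p,\theta)=k$, $k\in\mathbb{N}$, where $\theta$ is the slope $z'(t_1)$ at the leftmost point $t_1$ with $z(t_1)=-1$. *)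

theory Defs
  imports "HOL-Analysis.Analysis"
begin

definition lam :: "real \<Rightarrow> real" where
  "lam c = sqrt (2 - c^2) / 2"

definition omg :: "real \<Rightarrow> real" where
  "omg c = sqrt (2 + c^2) / 2"

text \<open>The decaying solution zeta with zeta(0) = -1, zeta'(0) = 0.\<close>
definition zeta :: "real \<Rightarrow> real \<Rightarrow> real" where
  "zeta c s = - exp (lam c * s) * (cos (omg c * s) - lam c / omg c * sin (omg c * s))"

definition tstar :: "real \<Rightarrow> real" where
  "tstar c = Inf {s. s > 0 \<and> zeta c s = -1}"

definition theta_min :: "real \<Rightarrow> real" where
  "theta_min c = deriv (zeta c) (tstar c)"

definition xi :: "real \<Rightarrow> real \<Rightarrow> real" where
  "xi c p = p * c^4 / 4"

definition kappa1 :: "real \<Rightarrow> real \<Rightarrow> real" where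
  "kappa1 c p = sqrt ((c^2 - sqrt (c^4 - 4 * xi c p)) / 2)"

definition kappa2 :: "real \<Rightarrow> real \<Rightarrow> real" where
  "kappa2 c p = sqrt ((c^2 + sqrt (c^4 - 4 * xi c p)) / 2)"

definition theta1 :: "real \<Rightarrow> real \<Rightarrow> real" where
  "theta1 c p = - 2 * sqrt (2 - c^2) / (2 - c^2 - c^2 * sqrt (1 - p))"

definition theta2 :: "real \<Rightarrow> real \<Rightarrow> real" where
  "theta2 c p = - 2 * sqrt (2 - c^2) / (2 - c^2 + c^2 * sqrt (1 - p))"

definition L :: "real \<Rightarrow> real \<Rightarrow> real \<Rightarrow> real" where
  "L c p \<theta> =
    (let a = kappa1 c p; b = kappa2 c p; e = xi c p; r = sqrt (2 - c^2) in
     (1 + b / a) / 2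
     + arctan ((b * (e - a^2 + e * \<theta> * r)) / (e * (\<theta> * a^2 + r + \<theta> * (1 - c^2)))) / pi
     - b / (a * pi) * arctan ((a * (e - b^2 + e * \<theta> * r)) / (e * (\<theta> * b^2 + r + \<theta> * (1 - c^2)))))"

end

theory Submission
  imports Defs
begin

lemma core:
  fixes a b e r c t :: real
  assumes a: "a>0" and b: "b>0" and e: "e = a^2*b^2" and ab: "a^2+b^2=c^2" and bc: "b\<le>c"
    and c: "c>0" and a1: "a^2<1" and r: "r>0" and tq: "t*(1-a^2)+r<0"
  shows "(1 + b/a)/2 + arctan ((b*(e - a^2 + e*t*r))/(e*(t*a^2+r+t*(1-c^2))))/pi
     - b/(a*pi)*arctan((a*(e - b^2 + e*t*r))/(e*(t*b^2+r+t*(1-c^2)))) \<le> 1 - c/pi*(r+t)"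
proof -
  define X where "X = (a*(e - b^2 + e*t*r))/(e*(t*b^2+r+t*(1-c^2)))"
  have t: "t < 0" using tq a1 r by (smt (verit) mult_nonneg_nonneg)
  have tr: "t*r < 0" using t r by (simp add: mult_neg_pos)
  have epos: "e > 0" using a b e by simp
  have nn: "a^2*(1+t*r) - 1 < 0"
  proof -
    have "a^2*(1+t*r) \<le> a^2" using tr by (simp add: mult_left_le)
    then show ?thesis using a1 by linarith
  qed
  have X: "X = (a^2*(1+t*r)-1)/(a*(t*(1-a^2)+r))"
  proof -
    have d: "t*b^2+r+t*(1-c^2) = t*(1-a^2)+r" using ab by (simp add: algebra_simps flip: ab)
    have "X = (a*(b^2*(a^2*(1+t*r)-1)))/(a^2*b^2*(t*(1-a^2)+r))"
      unfolding X_def d e by (simp add: algebra_simps power2_eq_square)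
    also have "\<dots> = (a^2*(1+t*r)-1)/(a*(t*(1-a^2)+r))"
    proof -
      have "(a*(b^2*(a^2*(1+t*r)-1)))/(a^2*b^2*(t*(1-a^2)+r)) = ((a*b^2)*(a^2*(1+t*r)-1))/((a*b^2)*(a*(t*(1-a^2)+r)))"
        by (simp add: algebra_simps power2_eq_square)
      also have "\<dots> = (a^2*(1+t*r)-1)/(a*(t*(1-a^2)+r))"
        using a b by (subst mult_divide_mult_cancel_left) auto
      finally show ?thesis .
    qed
    finally show ?thesis .
  qed
  have Xpos: "X > 0" unfolding X using nn tq a
    by (simp add: divide_neg_neg mult_pos_neg)
  have sg: "sgn X = 1" using Xpos by simp
  have inv0: "arctan (1/X) = sgn X * pi/2 - arctan X" using Xpos by (intro Transcendental.arctan_inverse) simp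
  have inv: "arctan (1/X) = pi/2 - arctan X" using inv0 unfolding sg by simp
  have le: "arctan (1/X) \<le> 1/X" using Xpos by (simp add: arctan_le_self)
  have A: "arctan ((b*(e - a^2 + e*t*r))/(e*(t*a^2+r+t*(1-c^2)))) \<le> pi/2"
    using arctan_ubound less_imp_le by blast
  define D where "D = 1 - a^2*(1+t*r)"
  have Dpos: "D > 0" using nn D_def by simp
  define u where "u = -t"
  have key: "b/a*(1/X) \<le> c*(-(r+t))"
  proof -
    have iX: "1/X = a*(t*(1-a^2)+r)/(a^2*(1+t*r)-1)" unfolding X by simp
    have "b/a*(1/X) = b*(t*(1-a^2)+r)/(a^2*(1+t*r)-1)" unfolding iX using a by simp
    also have "\<dots> = b*(-(t*(1-a^2)+r))/(-(a^2*(1+t*r)-1))" by (simp only: mult_minus_right minus_divide_divide)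
    also have "\<dots> = b*(u*(1-a^2) - r)/D" unfolding D_def u_def by (simp add: algebra_simps)
    finally have eq: "b/a*(1/X) = b*(u*(1-a^2) - r)/D" .
    have pos: "u*(1-a^2) - r > 0" using tq u_def by simp
    have "u*(1-a^2) \<le> u" using u_def t by (simp add: mult_left_le)
    hence ur: "u > r" using pos by linarith
    have s1: "b*(u*(1-a^2) - r) \<le> c*(u*(1-a^2) - r)" using bc pos by (simp add: mult_right_mono)
    have s2: "u*(1-a^2) - r \<le> (u-r)*D"
    proof -
      have "(u-r)*D - (u*(1-a^2) - r) = a^2*r*(1 + (u-r)*u)"
        unfolding D_def u_def by (simp add: algebra_simps)
      moreover have "(u-r)*u \<ge> 0" using ur r by simp
      hence "a^2*r*(1 + (u-r)*u) \<ge> 0" using r by simp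
      ultimately show ?thesis by linarith
    qed
    have "b*(u*(1-a^2) - r) \<le> c*((u-r)*D)" using s1 s2 c
      by (smt (verit) mult_left_mono)
    hence "b*(u*(1-a^2) - r)/D \<le> c*(u-r)" using Dpos by (simp add: divide_le_eq mult_ac)
    moreover have "c*(u-r) = c*(-(r+t))" unfolding u_def by (simp add: algebra_simps)
    ultimately show ?thesis using eq by simp
  qed
  define A0 where "A0 = arctan ((b*(e - a^2 + e*t*r))/(e*(t*a^2+r+t*(1-c^2))))"
  define k where "k = b/a"
  have k0: "k > 0" using a b k_def by simp
  have e1: "b/(a*pi)*arctan X = k*(pi/2 - arctan (1/X))/pi" using inv k_def by simp
  have m: "k*arctan (1/X) \<le> c*(-(r+t))"
    using le k0 key k_def by (smt (verit) mult_left_mono)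
  have "(1 + k)/2 + A0/pi - k*(pi/2 - arctan (1/X))/pi = 1/2 + A0/pi + (k*arctan (1/X))/pi"
    using pi_gt_zero by (simp add: field_simps)
  also have "\<dots> \<le> 1/2 + (pi/2)/pi + (c*(-(r+t)))/pi"
    using A m pi_gt_zero unfolding A0_def by (intro add_mono divide_right_mono) auto
  also have "\<dots> = 1 - c/pi*(r+t)" using pi_gt_zero by (simp add: field_simps)
  finally show ?thesis unfolding X_def[symmetric] A0_def[symmetric] e1 k_def .
qed

theorem lemma4:
  fixes c :: real
  assumes "0 < c" and "c < sqrt 2"
  shows "\<forall>p \<theta>. 0 < p \<and> p < 1 \<and> theta_min c < \<theta> \<and> \<theta> < theta2 c p \<and> \<theta> \<noteq> theta1 c p
           \<longrightarrow> L c p \<theta> \<le> 1 - c / pi * (sqrt (2 - c^2) + theta_min c)"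
proof (intro allI impI)
  fix p \<theta> :: real
  assume h: "0 < p \<and> p < 1 \<and> theta_min c < \<theta> \<and> \<theta> < theta2 c p \<and> \<theta> \<noteq> theta1 c p"
  have c0: "0 < c" using assms by simp
  have c2: "c^2 < 2"
  proof -
    have "c^2 < (sqrt 2)^2" using assms by (intro power_strict_mono) auto
    thus ?thesis by simp
  qed
  define r where "r = sqrt (2 - c^2)"
  have r: "r > 0" unfolding r_def using c2 by simp
  define s where "s = sqrt (1 - p)"
  have s0: "s > 0" unfolding s_def using h by simp
  have s1: "s < 1" unfolding s_def using h by simp
  have ss: "s^2 = 1 - p" unfolding s_def using h by simp
  have cc: "c^2 > 0" using c0 by simp
  have sq: "sqrt (c^4 - 4 * xi c p) = c^2 * s"
  proof -
    have "c^4 - 4 * xi c p = c^4 * s^2" unfolding xi_def ss by (simp add: algebra_simps)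
    also have "\<dots> = (c^2 * s)^2" by (simp add: power_mult_distrib flip: power_mult)
    finally show ?thesis using cc s0 by simp
  qed
  define a where "a = kappa1 c p"
  define b where "b = kappa2 c p"
  define e where "e = xi c p"
  have a2: "a^2 = (c^2 - c^2 * s)/2"
  proof -
    have "(c^2 - c^2 * s)/2 > 0" using cc s1 by (simp add: mult_less_cancel_left1)
    thus ?thesis unfolding a_def kappa1_def sq by simp
  qed
  have b2: "b^2 = (c^2 + c^2 * s)/2"
  proof -
    have "(c^2 + c^2 * s)/2 > 0" using cc s0 by (simp add: add_pos_pos)
    thus ?thesis unfolding b_def kappa2_def sq by simp
  qed
  have apos: "a > 0"
  proof -
    have "a \<ge> 0" unfolding a_def kappa1_def sq using cc s1 by (simp add: mult_less_cancel_left1)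
    moreover have "a^2 > 0" unfolding a2 using cc s1 by (simp add: mult_less_cancel_left1)
    ultimately show ?thesis by (cases "a = 0") auto
  qed
  have bpos: "b > 0"
  proof -
    have "b \<ge> 0" unfolding b_def kappa2_def sq using cc s0 by (simp add: add_nonneg_nonneg)
    moreover have "b^2 > 0" unfolding b2 using cc s0 by (simp add: add_pos_pos)
    ultimately show ?thesis by (cases "b = 0") auto
  qed
  have ab: "a^2 + b^2 = c^2" unfolding a2 b2 by (simp add: field_simps)
  have e: "e = a^2*b^2"
  proof -
    have "a^2*b^2 = c^4*(1 - s^2)/4" unfolding a2 b2 by (simp add: field_simps power2_eq_square power4_eq_xxxx)
    thus ?thesis unfolding e_def xi_def ss by simp
  qed
  have bc: "b \<le> c"
  proof -
    have "a^2 \<ge> 0" by simp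
    hence "b^2 \<le> c^2" using ab by linarith
    thus ?thesis using c0 bpos by (simp add: power2_le_iff_abs_le)
  qed
  have a1: "a^2 < 1"
  proof -
    have "a^2 \<le> c^2/2" unfolding a2 using cc s0 by (simp add: divide_right_mono)
    thus ?thesis using c2 by simp
  qed
  have q: "1 - a^2 = (2 - c^2 + c^2 * s)/2" unfolding a2 by (simp add: field_simps)
  have qpos: "2 - c^2 + c^2 * s > 0" using c2 cc s0 by (smt (verit) mult_pos_pos)
  have tq: "\<theta>*(1-a^2)+r<0"
  proof -
    have t2: "theta2 c p = (-2*r)/(2 - c^2 + c^2 * s)" unfolding theta2_def r_def s_def by simp
    have H: "\<theta> < (-2*r)/(2 - c^2 + c^2 * s)" using h t2 by simp
    have "\<theta>*(2 - c^2 + c^2 * s) < -2*r" using H by (subst (asm) pos_less_divide_eq[OF qpos])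
    thus ?thesis unfolding q by simp
  qed
  have "L c p \<theta> \<le> 1 - c/pi*(r+\<theta>)"
    unfolding L_def Let_def a_def[symmetric] b_def[symmetric] e_def[symmetric] r_def[symmetric]
    by (rule core[OF apos bpos e ab bc c0 a1 r tq])
  also have "\<dots> \<le> 1 - c / pi * (r + theta_min c)"
    using h c0 pi_gt_zero by (intro diff_left_mono mult_left_mono) auto
  finally show "L c p \<theta> \<le> 1 - c / pi * (sqrt (2 - c^2) + theta_min c)" unfolding r_def .
qed

end
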